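(* Let $m,n\in\mathbb{N}$, $m\ge2$, and $x_1,\dots,x_m\in(0,1)$. Suppose that $X_{(1)},\dots,X_{(m)}$ are independent random variables with $X_{(i)}\sim B(n,x_i)$ for $i=1,\dots,m$; that $S_{mn}^*\sim B(mn,\bar x)$ with $\bar x=\frac1m\sum_{i=1}^m x_i$; and that, for each $i=1,\dots,m$, $X_{(i),1},\dots,X_{(i),m}$ are independent random variables with $X_{(i),j}\sim B(n,x_i)$ for $j=1,\dots,m$. Then \begin{align*} X_{(1)}+\dots+X_{(m)}&\leqslant_{\mathrm{cx}} S_{mn}^*,\\ F_{S_{mn}^*}&\leqslant_{\mathrm{cx}}\tfrac1m\bigl[F_{X_{(1),1}+\dots+X_{(1),m}}+\dots+F_{X_{(m),1}+\dots+X_{(m),m}}\bigr],\\ F_{X_{(1)}+\dots+X_{(m)}}&\leqslant_{\mathrm{cx}}\tfrac1m\bigl[F_{X_{(1),1}+\dots+X_{(1),m}}+\dots+F_{X_{(m),1}+\dots+X_{(m),m}}\bigr]. \end{align*}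
   Context: $B(n,p)$ denotes the binomial distribution: $P(X=k)=\binom nk p^k(1-p)^{n-k}$, $k=0,\dots,n$. $F_X(t)=P(X<t)$. For distribution functions $G,H$ of probability measures with finite first moment, $G\leqslant_{\mathrm{cx}}H$ means $\int f\,dG\le\int f\,dH$ for all convex $f:\mathbb{R}\to\mathbb{R}$ for which the integrals exist; for random variables, $X\leqslant_{\mathrm{cx}}Y$ means $F_X\leqslant_{\mathrm{cx}}F_Y$. A convex combination of distribution functions is the distribution function of the corresponding mixture. *)

theory Defs
  imports "HOL-Probability.Probability"
begin

definition cx_le :: "real measure \<Rightarrow> real measure \<Rightarrow> bool" where
  "cx_le G H \<longleftrightarrow>
     (\<forall>f::real \<Rightarrow> real. convex_on UNIV f \<longrightarrow> integrable G f \<longrightarrow> integrable H f \<longrightarrow>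
        (\<integral>t. f t \<partial>G) \<le> (\<integral>t. f t \<partial>H))"

definition unif_mixture :: "nat set \<Rightarrow> (nat \<Rightarrow> real measure) \<Rightarrow> real measure" where
  "unif_mixture I K =
     measure_of UNIV (sets borel) (\<lambda>A. (\<Sum>i\<in>I. emeasure (K i) A) / of_nat (card I))"

definition binomial_rv :: "'a measure \<Rightarrow> ('a \<Rightarrow> real) \<Rightarrow> nat \<Rightarrow> real \<Rightarrow> bool" where
  "binomial_rv M X n p \<longleftrightarrow> X \<in> borel_measurable M \<and>
     (\<forall>k\<le>n. measure M {\<omega>\<in>space M. X \<omega> = real k} = real (n choose k) * p ^ k * (1 - p) ^ (n - k))"

end

theory Submission
  imports Defs
begin


primrec bsum :: "(real \<Rightarrow> real) \<Rightarrow> real list \<Rightarrow> real" where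
  "bsum f [] = f 0"
| "bsum f (p # ps) = (1 - p) * bsum f ps + p * bsum (\<lambda>t. f (t + 1)) ps"

lemma bsum_lin: "bsum (\<lambda>t. a * f t + b * g t) ps = a * bsum f ps + b * bsum g ps"
  by (induction ps arbitrary: f g) (simp_all add: algebra_simps)

lemma bsum_diff: "bsum (\<lambda>t. f t - g t) ps = bsum f ps - bsum g ps"
  using bsum_lin[of 1 f "-1" g ps] by simp

lemma bsum_nonneg: "(\<And>t. f t \<ge> 0) \<Longrightarrow> set ps \<subseteq> {0..1} \<Longrightarrow> bsum f ps \<ge> 0"
  by (induction ps arbitrary: f) auto

lemma bsum_swap: "bsum f (p # q # ps) = bsum f (q # p # ps)"
  by (simp add: algebra_simps)

lemma bsum_front: "a \<in> set xs \<Longrightarrow> bsum f xs = bsum f (a # remove1 a xs)"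
proof (induction xs arbitrary: f)
  case (Cons x xs)
  show ?case
  proof (cases "x = a")
    case False
    then have "a \<in> set xs" using Cons by auto
    then have "bsum f (x # xs) = bsum f (x # a # remove1 a xs)"
      using Cons.IH by simp
    also have "\<dots> = bsum f (a # x # remove1 a xs)" by (rule bsum_swap)
    finally show ?thesis using False by simp
  qed simp
qed simp

lemma bsum_perm: "mset xs = mset ys \<Longrightarrow> bsum f xs = bsum f ys"
proof (induction xs arbitrary: ys f)
  case Nil then show ?case by simp
next
  case (Cons a xs)
  then have a: "a \<in> set ys" by (metis list.set_intros(1) set_mset_mset)
  have mx: "mset xs = mset (remove1 a ys)" using Cons.prems by simp (metis add_mset_remove_trivial)
  show ?case using bsum_front[OF a, of f] Cons.IH[OF mx, of f] Cons.IH[OF mx, of "\<lambda>t. f (t + 1)"] by simp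
qed

lemma sum_remove: "q \<in> set ps \<Longrightarrow> sum_list ps = q + sum_list (remove1 (q::real) ps)"
  by (induction ps) auto

lemma sl_ge: "(\<forall>x\<in>set xs. a \<le> x) \<Longrightarrow> real (length xs) * a \<le> sum_list (xs::real list)"
  by (induction xs) (auto simp: algebra_simps intro: add_mono)

lemma sl_le: "(\<forall>x\<in>set xs. x \<le> a) \<Longrightarrow> sum_list (xs::real list) \<le> real (length xs) * a"
  by (induction xs) (auto simp: algebra_simps intro: add_mono)

definition dconv :: "(real \<Rightarrow> real) \<Rightarrow> bool" where
  "dconv f \<longleftrightarrow> (\<forall>t. 2 * f (t + 1) \<le> f t + f (t + 1 + 1))"

lemma dconv_shift: "dconv f \<Longrightarrow> dconv (\<lambda>t. f (t + c))"
  unfolding dconv_def by (metis add.commute add.left_commute)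

lemma bsum_smooth:
  assumes "dconv f" "set ps \<subseteq> {0..1}" "p + q = p' + q'" "p * q \<le> p' * q'"
  shows "bsum f (p # q # ps) \<le> bsum f (p' # q' # ps)"
proof -
  define B0 where "B0 = bsum f ps"
  define B1 where "B1 = bsum (\<lambda>t. f (t + 1)) ps"
  define B2 where "B2 = bsum (\<lambda>t. f (t + 1 + 1)) ps"
  have D: "B0 - 2 * B1 + B2 \<ge> 0"
  proof -
    have "bsum (\<lambda>t. 1 * (f t + f (t+1+1)) + (-2) * f (t+1)) ps \<ge> 0"
      using assms(1,2) by (intro bsum_nonneg) (auto simp: dconv_def)
    moreover have "bsum (\<lambda>t. f t + f (t+1+1)) ps = B0 + B2"
      using bsum_lin[of 1 f 1 "\<lambda>t. f (t+1+1)" ps] by (simp add: B0_def B2_def)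
    ultimately show ?thesis
      using bsum_lin[of 1 "\<lambda>t. f t + f (t+1+1)" "-2" "\<lambda>t. f (t+1)" ps] by (simp add: B1_def)
  qed
  have e: "bsum f (a # b # ps) = (1 - (a + b)) * B0 + (a + b) * B1 + a * b * (B0 - 2 * B1 + B2)" for a b
    by (simp add: B0_def B1_def B2_def algebra_simps)
  have "p * q * (B0 - 2 * B1 + B2) \<le> p' * q' * (B0 - 2 * B1 + B2)"
    using D assms(4) by (intro mult_right_mono) auto
  then show ?thesis unfolding e assms(3) by simp
qed

lemma hoeffding:
  assumes "dconv f"
  shows "set ps \<subseteq> {0..1} \<Longrightarrow> sum_list ps = real (length ps) * a \<Longrightarrow>
     bsum f ps \<le> bsum f (replicate (length ps) a)"
proof (induction "length (filter (\<lambda>x. x \<noteq> a) ps)" arbitrary: ps rule: less_induct)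
  case less
  show ?case
  proof (cases "\<forall>x\<in>set ps. x = a")
    case True
    then have "ps = replicate (length ps) a" by (simp add: replicate_length_same)
    then show ?thesis by simp
  next
    case False
    then obtain y where y: "y \<in> set ps" "y \<noteq> a" by auto
    have ex: "\<exists>p\<in>set ps. p < a" "\<exists>q\<in>set ps. q > a"
    proof -
      { fix q assume A: "\<forall>p\<in>set ps. p \<ge> a" "q \<in> set ps" "q > a"
        then have "sum_list ps = q + sum_list (remove1 q ps)" by (intro sum_remove)
        moreover have "real (length (remove1 q ps)) * a \<le> sum_list (remove1 q ps)"
          using A by (intro sl_ge) (meson set_remove1_subset subsetD)
        moreover have "length ps = Suc (length (remove1 q ps))"
          using A by (simp add: length_remove1) (metis One_nat_def Suc_pred length_pos_if_in_set)
        ultimately have False using less.prems A by (simp add: algebra_simps) }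
      moreover
      { fix q assume A: "\<forall>p\<in>set ps. p \<le> a" "q \<in> set ps" "q < a"
        then have "sum_list ps = q + sum_list (remove1 q ps)" by (intro sum_remove)
        moreover have "sum_list (remove1 q ps) \<le> real (length (remove1 q ps)) * a"
          using A by (intro sl_le) (meson set_remove1_subset subsetD)
        moreover have "length ps = Suc (length (remove1 q ps))"
          using A by (simp add: length_remove1) (metis One_nat_def Suc_pred length_pos_if_in_set)
        ultimately have False using less.prems A by (simp add: algebra_simps) }
      ultimately show "\<exists>p\<in>set ps. p < a" "\<exists>q\<in>set ps. q > a"
        using y by (meson linorder_neqE_linordered_idom not_le)+
    qed
    then obtain p q where pq: "p \<in> set ps" "p < a" "q \<in> set ps" "q > a" by blast
    define rest where "rest = remove1 q (remove1 p ps)"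
    have qr: "q \<in> set (remove1 p ps)" using pq by (metis in_set_remove1 less_asym')
    have m1: "mset (remove1 p ps) = add_mset q (mset rest)"
      using qr unfolding rest_def by (metis insert_DiffM mset_remove1 set_mset_mset)
    have m: "mset ps = mset (p # q # rest)"
      using pq m1 by (metis insert_DiffM mset_remove1 set_mset_mset mset.simps(2))
    define ps' where "ps' = a # (p + q - a) # rest"
    have p01: "0 \<le> p" "q \<le> 1" using pq less.prems(1) by auto
    have rest01: "set rest \<subseteq> {0..1}"
      using less.prems(1) unfolding rest_def by (meson dual_order.trans set_remove1_subset)
    have len: "length ps' = length ps"
      using m by (metis ps'_def size_mset length_Cons)
    have sum: "sum_list ps' = sum_list ps"
      using m by (metis ps'_def sum_mset_sum_list sum_list.Cons add.assoc diff_add_cancel add.commute)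
    have set': "set ps' \<subseteq> {0..1}" using rest01 pq p01 by (auto simp: ps'_def)
    have "bsum f ps = bsum f (p # q # rest)" using m by (rule bsum_perm)
    also have "\<dots> \<le> bsum f ps'"
      unfolding ps'_def
    proof (rule bsum_smooth[OF assms rest01])
      show "p * q \<le> a * (p + q - a)"
      proof -
        have "0 \<le> (a - p) * (q - a)" using pq by simp
        then show ?thesis by (simp add: algebra_simps)
      qed
    qed simp
    also have "\<dots> \<le> bsum f (replicate (length ps') a)"
    proof (rule less.hyps)
      have "length (filter (\<lambda>x. x \<noteq> a) ps) = length (filter (\<lambda>x. x \<noteq> a) (p # q # rest))"
        using m by (metis mset_filter size_mset)
      moreover have "length (filter (\<lambda>x. x \<noteq> a) ps') \<le> Suc (length (filter (\<lambda>x. x \<noteq> a) rest))"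
        by (simp add: ps'_def)
      ultimately show "length (filter (\<lambda>x. x \<noteq> a) ps') < length (filter (\<lambda>x. x \<noteq> a) ps)"
        using pq by simp
      show "set ps' \<subseteq> {0..1}" by (rule set')
      show "sum_list ps' = real (length ps') * a" using sum len less.prems by simp
    qed
    finally show ?thesis using len by simp
  qed
qed



lemma bsum_append: "bsum g (xs @ ys) = bsum (\<lambda>t. bsum (\<lambda>s. g (t + s)) ys) xs"
  by (induction xs arbitrary: g) (simp_all add: ac_simps)

lemma binom_expect:
  assumes "p \<in> {0..1}"
  shows "bsum g (replicate n p) = measure_pmf.expectation (binomial_pmf n p) (\<lambda>k. g (real k))"
proof (induction n arbitrary: g)
  case 0
  then show ?case using assms by (simp add: binomial_pmf_0)
next
  case (Suc n)
  have e: "binomial_pmf n p \<bind> (\<lambda>k. return_pmf ((if b then 1 else 0) + k)) =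
      map_pmf (\<lambda>k. (if b then 1 else 0) + k) (binomial_pmf n p)" for b
    by (simp add: map_pmf_def)
  have fin: "finite (set_pmf (binomial_pmf n p \<bind> (\<lambda>k. return_pmf ((if b then 1 else 0) + k))))" for b
    unfolding e using finite_set_pmf_binomial_pmf[OF assms] by simp
  have "measure_pmf.expectation (binomial_pmf (Suc n) p) (\<lambda>k. g (real k)) =
     (\<Sum>b\<in>UNIV. pmf (bernoulli_pmf p) b *\<^sub>R measure_pmf.expectation
        (binomial_pmf n p \<bind> (\<lambda>k. return_pmf ((if b then 1 else 0) + k))) (\<lambda>k. g (real k)))"
    unfolding binomial_pmf_Suc[OF assms]
    by (rule pmf_expectation_bind) (use fin in auto)
  also have "\<dots> = (1 - p) * bsum g (replicate n p) + p * bsum (\<lambda>t. g (t + 1)) (replicate n p)"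
    using assms by (simp only: UNIV_bool e) (simp add: Suc.IH ac_simps)
  finally show ?case by simp
qed

lemma binom_sum:
  assumes "p \<in> {0..1}"
  shows "measure_pmf.expectation (binomial_pmf n p) (\<lambda>k. g (real k)) =
    (\<Sum>k\<le>n. real (n choose k) * p ^ k * (1 - p) ^ (n - k) * g (real k))"
proof -
  have "set_pmf (binomial_pmf n p) \<subseteq> {..n}"
    using assms by (auto simp: set_pmf_binomial_eq)
  then show ?thesis
    using assms by (subst integral_measure_pmf_real[where A="{..n}"]) (auto simp: mult_ac)
qed

lemma bsum_rep_deriv:
  "((\<lambda>p. bsum g (replicate N p)) has_real_derivative
      (real N * bsum (\<lambda>t. g (t + 1) - g t) (replicate (N - 1) p))) (at p)"
proof (induction N arbitrary: g)
  case 0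
  then show ?case by simp
next
  case (Suc N)
  note d1 = Suc.IH[of g] and d2 = Suc.IH[of "\<lambda>t. g (t + 1)"]
  have d: "((\<lambda>p. (1 - p) * bsum g (replicate N p) + p * bsum (\<lambda>t. g (t + 1)) (replicate N p))
     has_real_derivative
      ((-1) * bsum g (replicate N p) + (1 - p) * (real N * bsum (\<lambda>t. g (t + 1) - g t) (replicate (N - 1) p))
       + (1 * bsum (\<lambda>t. g (t + 1)) (replicate N p) +
          p * (real N * bsum (\<lambda>t. g (t + 1 + 1) - g (t + 1)) (replicate (N - 1) p))))) (at p)"
    apply (rule DERIV_add)
     apply (rule DERIV_cong[OF DERIV_mult'[OF DERIV_diff[OF DERIV_const DERIV_ident] d1]])
     apply simp
    apply (rule DERIV_cong[OF DERIV_mult'[OF DERIV_ident d2]])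
    apply simp
    done
  have diff: "bsum (\<lambda>t. g (t + 1)) (replicate N p) - bsum g (replicate N p) = bsum (\<lambda>t. g (t + 1) - g t) (replicate N p)"
    by (simp add: bsum_diff)
  have eq: "(-1) * bsum g (replicate N p) + (1 - p) * (real N * bsum (\<lambda>t. g (t + 1) - g t) (replicate (N - 1) p))
       + (1 * bsum (\<lambda>t. g (t + 1)) (replicate N p) +
          p * (real N * bsum (\<lambda>t. g (t + 1 + 1) - g (t + 1)) (replicate (N - 1) p)))
     = real (Suc N) * bsum (\<lambda>t. g (t + 1) - g t) (replicate (Suc N - 1) p)"
  proof (cases N)
    case 0
    then show ?thesis by simp
  next
    case (Suc K)
    then show ?thesis using diff by (simp add: algebra_simps)
  qed
  show ?case using d unfolding eq by (simp add: algebra_simps)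
qed

lemma dconv_convex: "convex_on UNIV f \<Longrightarrow> dconv f"
  unfolding dconv_def
proof
  fix t assume c: "convex_on UNIV f"
  have "f ((1 - 1/2) *\<^sub>R t + (1/2) *\<^sub>R (t + 1 + 1)) \<le> (1 - 1/2) * f t + (1/2) * f (t + 1 + 1)"
    by (rule convex_onD[OF c]) auto
  moreover have "(1 - 1/2) *\<^sub>R t + (1/2) *\<^sub>R (t + 1 + 1) = t + 1" by (simp add: field_simps)
  ultimately show "2 * f (t + 1) \<le> f t + f (t + 1 + 1)" by simp
qed

lemma bsum_rep_convex:
  assumes "dconv f"
  shows "convex_on {0..1} (\<lambda>p. bsum f (replicate N p))"
proof (rule f''_ge0_imp_convex)
  show "convex {0..1::real}" by simp
  fix p :: real
  show "((\<lambda>p. bsum f (replicate N p)) has_real_derivative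
      (real N * bsum (\<lambda>t. f (t + 1) - f t) (replicate (N - 1) p))) (at p)"
    by (rule bsum_rep_deriv)
  show "((\<lambda>p. real N * bsum (\<lambda>t. f (t + 1) - f t) (replicate (N - 1) p)) has_real_derivative
     real N * (real (N - 1) * bsum (\<lambda>t. (f (t + 1 + 1) - f (t + 1)) - (f (t + 1) - f t)) (replicate (N - 1 - 1) p))) (at p)"
    by (intro DERIV_cmult bsum_rep_deriv)
  assume "p \<in> {0..1}"
  then have "bsum (\<lambda>t. (f (t + 1 + 1) - f (t + 1)) - (f (t + 1) - f t)) (replicate (N - 1 - 1) p) \<ge> 0"
  proof (intro bsum_nonneg)
    fix t show "(f (t + 1 + 1) - f (t + 1)) - (f (t + 1) - f t) \<ge> 0"
      using assms[unfolded dconv_def, rule_format, of t] by linarith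
  qed auto
  then show "real N * (real (N - 1) * bsum (\<lambda>t. (f (t + 1 + 1) - f (t + 1)) - (f (t + 1) - f t)) (replicate (N - 1 - 1) p)) \<ge> 0"
    by simp
qed

lemma jensen_bsum:
  assumes "dconv f" "finite I" "I \<noteq> {}" "\<And>i. i \<in> I \<Longrightarrow> x i \<in> {0..1}"
  shows "bsum f (replicate N ((\<Sum>i\<in>I. x i) / real (card I))) \<le>
     (\<Sum>i\<in>I. bsum f (replicate N (x i))) / real (card I)"
proof -
  have "(\<lambda>p. bsum f (replicate N p)) (\<Sum>i\<in>I. (1 / real (card I)) *\<^sub>R x i) \<le>
      (\<Sum>i\<in>I. (1 / real (card I)) * (\<lambda>p. bsum f (replicate N p)) (x i))"
    by (rule convex_on_sum[OF assms(2,3) bsum_rep_convex[OF assms(1)]]) (use assms in auto)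
  then show ?thesis by (simp add: sum_distrib_left[symmetric] sum_divide_distrib[symmetric])
qed



lemma (in prob_space) integrable_fin:
  fixes g :: "real \<Rightarrow> real"
  assumes "F \<in> borel_measurable M" "finite S" "AE \<omega> in M. F \<omega> \<in> S" "g \<in> borel_measurable borel"
  shows "integrable M (\<lambda>\<omega>. g (F \<omega>))"
proof (rule integrable_const_bound[where B="\<Sum>s\<in>S. \<bar>g s\<bar>"])
  show "AE \<omega> in M. norm (g (F \<omega>)) \<le> (\<Sum>s\<in>S. \<bar>g s\<bar>)"
    using assms(3) by eventually_elim (use assms(2) in \<open>auto intro: member_le_sum[of _ S "\<lambda>s. \<bar>g s\<bar>", simplified]\<close>)
  show "(\<lambda>\<omega>. g (F \<omega>)) \<in> borel_measurable M" using assms by measurable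
qed

lemma (in prob_space) binom_rv_props:
  assumes bin: "binomial_rv M Z n p" and p: "p \<in> {0..1}"
  shows binom_rv_AE: "AE \<omega> in M. Z \<omega> \<in> real ` {..n}"
    and binom_rv_int: "g \<in> borel_measurable borel \<Longrightarrow>
       (\<integral>\<omega>. g (Z \<omega>) \<partial>M) = (\<Sum>k\<le>n. real (n choose k) * p ^ k * (1 - p) ^ (n - k) * g (real k))"
proof -
  have Zm[measurable]: "Z \<in> borel_measurable M" using bin by (simp add: binomial_rv_def)
  define E where "E k = {\<omega>\<in>space M. Z \<omega> = real k}" for k
  have Em[measurable]: "E k \<in> sets M" for k unfolding E_def by measurable
  have pE: "prob (E k) = real (n choose k) * p ^ k * (1 - p) ^ (n - k)" if "k \<le> n" for k
    using bin that by (simp add: binomial_rv_def E_def)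
  have "prob (\<Union>k\<in>{..n}. E k) = (\<Sum>k\<le>n. prob (E k))"
    by (rule finite_measure_finite_Union) (auto simp: disjoint_family_on_def E_def)
  also have "\<dots> = (\<Sum>k\<le>n. real (n choose k) * p ^ k * (1 - p) ^ (n - k))"
    by (simp add: pE)
  also have "\<dots> = (p + (1 - p)) ^ n" by (subst binomial_ring) (simp add: mult_ac)
  finally have "prob (\<Union>k\<in>{..n}. E k) = 1" by simp
  then have ae: "AE \<omega> in M. \<omega> \<in> (\<Union>k\<in>{..n}. E k)" by (rule AE_prob_1)
  then show "AE \<omega> in M. Z \<omega> \<in> real ` {..n}"
    by eventually_elim (auto simp: E_def)
  assume g[measurable]: "g \<in> borel_measurable borel"
  have "AE \<omega> in M. g (Z \<omega>) = (\<Sum>k\<le>n. indicator (E k) \<omega> * g (real k))"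
    using ae
  proof eventually_elim
    case (elim \<omega>)
    then obtain j where j: "j \<le> n" "\<omega> \<in> E j" by auto
    then have "indicator (E k) \<omega> * g (real k) = (if k = j then g (real j) else 0)" for k
      by (auto simp: E_def indicator_def)
    then show ?case using j by (simp add: E_def sum.delta)
  qed
  then have "(\<integral>\<omega>. g (Z \<omega>) \<partial>M) = (\<integral>\<omega>. (\<Sum>k\<le>n. indicator (E k) \<omega> * g (real k)) \<partial>M)"
    by (intro integral_cong_AE) measurable
  also have "\<dots> = (\<Sum>k\<le>n. (\<integral>\<omega>. indicator (E k) \<omega> * g (real k) \<partial>M))"
    by (rule Bochner_Integration.integral_sum) (auto simp: mult.commute[of _ "g _"] intro!: integrable_real_indicator simp: less_top[symmetric])
  also have "\<dots> = (\<Sum>k\<le>n. prob (E k) * g (real k))"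
    by (intro sum.cong refl) (simp add: Int_absorb2[OF sets.sets_into_space[OF Em]])
  also have "\<dots> = (\<Sum>k\<le>n. real (n choose k) * p ^ k * (1 - p) ^ (n - k) * g (real k))"
    by (intro sum.cong refl) (simp add: pE)
  finally show "(\<integral>\<omega>. g (Z \<omega>) \<partial>M) = (\<Sum>k\<le>n. real (n choose k) * p ^ k * (1 - p) ^ (n - k) * g (real k))" .
qed



lemma (in prob_space) indep_sum:
  assumes "finite I"
  shows "indep_vars (\<lambda>_. borel) X I \<Longrightarrow> (\<forall>i\<in>I. binomial_rv M (X i) n (x i) \<and> x i \<in> {0..1}) \<Longrightarrow>
    \<exists>xs. distinct xs \<and> set xs = I \<and> (AE \<omega> in M. (\<Sum>i\<in>I. X i \<omega>) \<in> real ` {..n * card I}) \<and>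
      (\<forall>g\<in>borel_measurable borel. (\<integral>\<omega>. g (\<Sum>i\<in>I. X i \<omega>) \<partial>M) = bsum g (concat (map (\<lambda>i. replicate n (x i)) xs)))"
  using assms
proof (induction I rule: finite_induct)
  case empty
  show ?case by (intro exI[of _ "[]"]) (simp add: prob_space)
next
  case (insert a I)
  have indI: "indep_vars (\<lambda>_. borel) X I"
    using insert.prems(1) by (rule indep_vars_subset) auto
  obtain xs where xs: "distinct xs" "set xs = I"
    and aeT: "AE \<omega> in M. (\<Sum>i\<in>I. X i \<omega>) \<in> real ` {..n * card I}"
    and intT: "\<And>g. g \<in> borel_measurable borel \<Longrightarrow> (\<integral>\<omega>. g (\<Sum>i\<in>I. X i \<omega>) \<partial>M) = bsum g (concat (map (\<lambda>i. replicate n (x i)) xs))"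
    using insert.IH[OF indI] insert.prems(2) by auto
  define ps where "ps = concat (map (\<lambda>i. replicate n (x i)) xs)"
  have bin: "binomial_rv M (X a) n (x a)" and xa: "x a \<in> {0..1}" using insert.prems(2) by auto
  have Xm[measurable]: "X i \<in> borel_measurable M" if "i \<in> insert a I" for i
    using insert.prems(2) that by (auto simp: binomial_rv_def)
  define T where "T \<omega> = (\<Sum>i\<in>I. X i \<omega>)" for \<omega>
  have Tm[measurable]: "T \<in> borel_measurable M" unfolding T_def
    by (intro borel_measurable_sum Xm) auto
  have Xam[measurable]: "X a \<in> borel_measurable M" by (rule Xm) simp
  have sumeq: "(\<Sum>i\<in>insert a I. X i \<omega>) = X a \<omega> + T \<omega>" for \<omega>
    using insert.hyps by (simp add: T_def)
  have aeXa: "AE \<omega> in M. X a \<omega> \<in> real ` {..n}" by (rule binom_rv_AE[OF bin xa])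
  have ir: "indep_var (PiM {a} (\<lambda>_. borel)) (\<lambda>\<omega>. restrict (\<lambda>i. X i \<omega>) {a})
      (PiM I (\<lambda>_. borel)) (\<lambda>\<omega>. restrict (\<lambda>i. X i \<omega>) I)"
    by (rule indep_var_restrict[OF insert.prems(1)]) (use insert.hyps in auto)
  show ?case
  proof (intro exI[of _ "a # xs"] conjI ballI)
    show "distinct (a # xs)" "set (a # xs) = insert a I" using xs insert.hyps by auto
    show "AE \<omega> in M. (\<Sum>i\<in>insert a I. X i \<omega>) \<in> real ` {..n * card (insert a I)}"
      using aeXa aeT
    proof eventually_elim
      case (elim \<omega>)
      then obtain j l where "X a \<omega> = real j" "j \<le> n" "(\<Sum>i\<in>I. X i \<omega>) = real l" "l \<le> n * card I" by auto
      then show ?case using insert.hyps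
        by (auto simp: sumeq T_def intro!: image_eqI[of _ _ "j + l"])
    qed
    fix g :: "real \<Rightarrow> real" assume g[measurable]: "g \<in> borel_measurable borel"
    define F where "F k \<omega> = (if X a \<omega> = real k then 1 else 0) * g (real k + T \<omega>)" for k \<omega>
    have Fint: "integrable M (F k)" and Fval: "(\<integral>\<omega>. F k \<omega> \<partial>M) = real (n choose k) * x a ^ k * (1 - x a) ^ (n - k) * bsum (\<lambda>s. g (real k + s)) ps"
      if "k \<le> n" for k
    proof -
      have m1: "(\<lambda>y. if y a = real k then 1 else 0 :: real) \<in> borel_measurable (PiM {a} (\<lambda>_. borel))"
        by measurable
      have m2: "(\<lambda>y. g (real k + (\<Sum>i\<in>I. y i))) \<in> borel_measurable (PiM I (\<lambda>_. borel))"
        by measurable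
      note iv0 = indep_var_compose[OF ir m1 m2]
      have e1: "(\<lambda>y. if y a = real k then 1 else 0 :: real) \<circ> (\<lambda>\<omega>. restrict (\<lambda>i. X i \<omega>) {a}) = (\<lambda>\<omega>. if X a \<omega> = real k then 1 else 0)"
        by (simp add: fun_eq_iff)
      have e2: "(\<lambda>y. g (real k + (\<Sum>i\<in>I. y i))) \<circ> (\<lambda>\<omega>. restrict (\<lambda>i. X i \<omega>) I) = (\<lambda>\<omega>. g (real k + T \<omega>))"
        by (simp add: fun_eq_iff T_def)
      have iv: "indep_var borel (\<lambda>\<omega>. if X a \<omega> = real k then 1 else 0 :: real) borel (\<lambda>\<omega>. g (real k + T \<omega>))"
        using iv0 unfolding e1 e2 .
      have i1: "integrable M (\<lambda>\<omega>. if X a \<omega> = real k then 1 else 0 :: real)"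
        by (rule integrable_const_bound[where B=1]) auto
      have i2: "integrable M (\<lambda>\<omega>. g (real k + T \<omega>))"
        using integrable_fin[OF Tm _ aeT[unfolded T_def[symmetric]], of "\<lambda>s. g (real k + s)"] by simp
      show "integrable M (F k)" unfolding F_def by (rule indep_var_integrable[OF iv i1 i2])
      have "(\<integral>\<omega>. F k \<omega> \<partial>M) = (\<integral>\<omega>. (if X a \<omega> = real k then 1 else 0 :: real) \<partial>M) * (\<integral>\<omega>. g (real k + T \<omega>) \<partial>M)"
        unfolding F_def by (rule indep_var_lebesgue_integral[OF iv i1 i2])
      also have "(\<integral>\<omega>. (if X a \<omega> = real k then 1 else 0 :: real) \<partial>M) = prob {\<omega>\<in>space M. X a \<omega> = real k}"
      proof -
        have "(\<integral>\<omega>. (if X a \<omega> = real k then 1 else 0 :: real) \<partial>M) = (\<integral>\<omega>. indicator {\<omega>\<in>space M. X a \<omega> = real k} \<omega> \<partial>M)"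
          by (intro Bochner_Integration.integral_cong) (auto simp: indicator_def)
        then show ?thesis by simp
      qed
      also have "prob {\<omega>\<in>space M. X a \<omega> = real k} = real (n choose k) * x a ^ k * (1 - x a) ^ (n - k)"
        using bin that by (simp add: binomial_rv_def)
      also have "(\<integral>\<omega>. g (real k + T \<omega>) \<partial>M) = bsum (\<lambda>s. g (real k + s)) ps"
        unfolding T_def ps_def by (rule intT) measurable
      finally show "(\<integral>\<omega>. F k \<omega> \<partial>M) = real (n choose k) * x a ^ k * (1 - x a) ^ (n - k) * bsum (\<lambda>s. g (real k + s)) ps" .
    qed
    have "AE \<omega> in M. g (\<Sum>i\<in>insert a I. X i \<omega>) = (\<Sum>k\<le>n. F k \<omega>)"
      using aeXa
    proof eventually_elim
      case (elim \<omega>)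
      then obtain j where j: "j \<le> n" "X a \<omega> = real j" by auto
      then have "F k \<omega> = (if k = j then g (real j + T \<omega>) else 0)" for k
        by (auto simp: F_def)
      then show ?case using j by (simp add: sumeq sum.delta)
    qed
    then have "(\<integral>\<omega>. g (\<Sum>i\<in>insert a I. X i \<omega>) \<partial>M) = (\<integral>\<omega>. (\<Sum>k\<le>n. F k \<omega>) \<partial>M)"
      by (intro integral_cong_AE) (measurable, auto simp: F_def)
    also have "\<dots> = (\<Sum>k\<le>n. (\<integral>\<omega>. F k \<omega> \<partial>M))"
      by (rule Bochner_Integration.integral_sum) (use Fint in auto)
    also have "\<dots> = (\<Sum>k\<le>n. real (n choose k) * x a ^ k * (1 - x a) ^ (n - k) * bsum (\<lambda>s. g (real k + s)) ps)"
      by (intro sum.cong refl Fval) auto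
    also have "\<dots> = bsum (\<lambda>t. bsum (\<lambda>s. g (t + s)) ps) (replicate n (x a))"
      using binom_expect[OF xa, of "\<lambda>t. bsum (\<lambda>s. g (t + s)) ps" n] binom_sum[OF xa, of n "\<lambda>t. bsum (\<lambda>s. g (t + s)) ps"]
      by simp
    also have "\<dots> = bsum g (concat (map (\<lambda>i. replicate n (x i)) (a # xs)))"
      by (simp add: bsum_append ps_def)
    finally show "(\<integral>\<omega>. g (\<Sum>i\<in>insert a I. X i \<omega>) \<partial>M) = bsum g (concat (map (\<lambda>i. replicate n (x i)) (a # xs)))" .
  qed
qed



lemma distr_eq_binom:
  assumes M: "prob_space M" and Fm: "F \<in> borel_measurable M" and p: "p \<in> {0..1}"
    and int: "\<And>g. g \<in> borel_measurable borel \<Longrightarrow> (\<integral>\<omega>. g (F \<omega>) \<partial>M) = bsum g (replicate N p)"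
  shows "distr M borel F = distr (measure_pmf (binomial_pmf N p)) borel real"
proof (rule measure_eqI)
  show "sets (distr M borel F) = sets (distr (measure_pmf (binomial_pmf N p)) borel real)" by simp
  fix A assume A: "A \<in> sets (distr M borel F)"
  then have Ab[measurable]: "A \<in> sets borel" by simp
  interpret D1: prob_space "distr M borel F" by (rule prob_space.prob_space_distr[OF M Fm])
  interpret D2: prob_space "distr (measure_pmf (binomial_pmf N p)) borel real"
    by (rule prob_space.prob_space_distr) (auto simp: measure_pmf.prob_space_axioms)
  have "measure (distr M borel F) A = (\<integral>t. indicator A t \<partial>distr M borel F)" by simp
  also have "\<dots> = (\<integral>\<omega>. indicator A (F \<omega>) \<partial>M)" by (rule integral_distr[OF Fm]) measurable
  also have "\<dots> = bsum (indicator A) (replicate N p)" by (rule int) measurable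
  also have "\<dots> = measure_pmf.expectation (binomial_pmf N p) (\<lambda>k. indicator A (real k))"
    by (rule binom_expect[OF p])
  also have "\<dots> = (\<integral>t. indicator A t \<partial>distr (measure_pmf (binomial_pmf N p)) borel real)"
    by (rule integral_distr[symmetric]) auto
  also have "\<dots> = measure (distr (measure_pmf (binomial_pmf N p)) borel real) A" by simp
  finally show "emeasure (distr M borel F) A = emeasure (distr (measure_pmf (binomial_pmf N p)) borel real) A"
    by (simp add: D1.emeasure_eq_measure D2.emeasure_eq_measure)
qed

lemma mixture_eq:
  assumes I: "finite I" "I \<noteq> {}" and K: "\<And>i. i \<in> I \<Longrightarrow> K i = distr (measure_pmf (Q i)) borel (real :: nat \<Rightarrow> real)"
  shows "unif_mixture I K = distr (measure_pmf (pmf_of_set I \<bind> Q)) borel real"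
proof -
  let ?R = "distr (measure_pmf (pmf_of_set I \<bind> Q)) borel (real :: nat \<Rightarrow> real)"
  have "?R = measure_of (space ?R) (sets ?R) (emeasure ?R)" by (rule measure_of_of_measure[symmetric])
  also have "\<dots> = measure_of UNIV (sets borel) (emeasure ?R)" by simp
  also have "\<dots> = measure_of UNIV (sets borel) (\<lambda>A. (\<Sum>i\<in>I. emeasure (K i) A) / of_nat (card I))"
  proof (rule measure_of_eq)
    show "sets borel \<subseteq> Pow UNIV" by simp
    fix A :: "real set" assume "A \<in> sigma_sets UNIV (sets borel)"
    then have A: "A \<in> sets borel" using sets.sigma_sets_eq[of borel] by (metis space_borel)
    have "emeasure ?R A = emeasure (measure_pmf (bind_pmf (pmf_of_set I) Q)) (real -` A)"
      using A by (subst emeasure_distr) auto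
    also have "\<dots> = (\<Sum>i\<in>I. emeasure (Q i) (real -` A)) / of_nat (card I)"
      using I by (simp add: nn_integral_pmf_of_set)
    also have "\<dots> = (\<Sum>i\<in>I. emeasure (K i) A) / of_nat (card I)"
      using A by (intro arg_cong2[where f="(/)"] sum.cong refl) (auto simp: K emeasure_distr)
    finally show "emeasure ?R A = (\<Sum>i\<in>I. emeasure (K i) A) / of_nat (card I)" .
  qed
  finally show ?thesis unfolding unif_mixture_def by simp
qed

lemma integral_mixture:
  assumes I: "finite I" "I \<noteq> {}" and p: "\<And>i. i \<in> I \<Longrightarrow> x i \<in> {0..1}" and g: "g \<in> borel_measurable borel"
  shows "(\<integral>t. g t \<partial>distr (measure_pmf (pmf_of_set I \<bind> (\<lambda>i. binomial_pmf N (x i)))) borel real) =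
     (\<Sum>i\<in>I. bsum g (replicate N (x i))) / real (card I)"
proof -
  have "(\<integral>t. g t \<partial>distr (measure_pmf (pmf_of_set I \<bind> (\<lambda>i. binomial_pmf N (x i)))) borel real) =
     measure_pmf.expectation (pmf_of_set I \<bind> (\<lambda>i. binomial_pmf N (x i))) (\<lambda>k. g (real k))"
    by (rule integral_distr) (auto simp: g)
  also have "\<dots> = (\<Sum>i\<in>I. measure_pmf.expectation (binomial_pmf N (x i)) (\<lambda>k. g (real k)) /\<^sub>R real (card I))"
    by (rule pmf_expectation_bind_pmf_of_set) (use I p in auto)
  also have "\<dots> = (\<Sum>i\<in>I. bsum g (replicate N (x i))) / real (card I)"
    using p by (simp add: binom_expect sum_divide_distrib divide_inverse_commute sum_distrib_left)
  finally show ?thesis .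
qed



lemma len_cr: "length (concat (map (\<lambda>i. replicate n (x i)) xs)) = n * length xs"
  by (induction xs) auto

lemma sum_cr: "sum_list (concat (map (\<lambda>i. replicate n (x i)) xs)) = real n * sum_list (map x xs)"
  by (induction xs) (auto simp: sum_list_replicate algebra_simps)

lemma const_cr: "concat (map (\<lambda>i. replicate n c) xs) = replicate (n * length xs) c"
  by (induction xs) (auto simp: replicate_add[symmetric])

theorem proposition3:
  fixes m n :: nat and x :: "nat \<Rightarrow> real"
    and M :: "'a measure" and X :: "nat \<Rightarrow> 'a \<Rightarrow> real"
    and MS :: "'b measure" and S :: "'b \<Rightarrow> real"
    and P :: "nat \<Rightarrow> 'c measure" and Y :: "nat \<Rightarrow> nat \<Rightarrow> 'c \<Rightarrow> real"
  assumes m2: "m \<ge> 2"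
    and x01: "\<And>i. i \<in> {1..m} \<Longrightarrow> 0 < x i \<and> x i < 1"
    and M: "prob_space M"
    and X_indep: "prob_space.indep_vars M (\<lambda>_. borel) X {1..m}"
    and X_bin: "\<And>i. i \<in> {1..m} \<Longrightarrow> binomial_rv M (X i) n (x i)"
    and MS: "prob_space MS"
    and S_bin: "binomial_rv MS S (m * n) ((\<Sum>i=1..m. x i) / real m)"
    and P: "\<And>i. i \<in> {1..m} \<Longrightarrow> prob_space (P i)"
    and Y_indep: "\<And>i. i \<in> {1..m} \<Longrightarrow> prob_space.indep_vars (P i) (\<lambda>_. borel) (Y i) {1..m}"
    and Y_bin: "\<And>i j. i \<in> {1..m} \<Longrightarrow> j \<in> {1..m} \<Longrightarrow> binomial_rv (P i) (Y i j) n (x i)"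
  shows "cx_le (distr M borel (\<lambda>\<omega>. \<Sum>i=1..m. X i \<omega>)) (distr MS borel S)
    \<and> cx_le (distr MS borel S)
           (unif_mixture {1..m} (\<lambda>i. distr (P i) borel (\<lambda>\<omega>. \<Sum>j=1..m. Y i j \<omega>)))
    \<and> cx_le (distr M borel (\<lambda>\<omega>. \<Sum>i=1..m. X i \<omega>))
           (unif_mixture {1..m} (\<lambda>i. distr (P i) borel (\<lambda>\<omega>. \<Sum>j=1..m. Y i j \<omega>)))"
proof -
  define I where "I = {1..m}"
  have I: "finite I" "I \<noteq> {}" "card I = m" using m2 by (auto simp: I_def)
  have m0: "real m > 0" using m2 by simp
  have x1: "x i \<in> {0..1}" if "i \<in> I" for i using x01[of i] that by (auto simp: I_def)
  define xb where "xb = (\<Sum>i\<in>I. x i) / real m"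
  have xb: "xb \<in> {0..1}"
  proof -
    have "(\<Sum>i\<in>I. x i) \<le> (\<Sum>i\<in>I. 1)" using x1 by (intro sum_mono) auto
    moreover have "(\<Sum>i\<in>I. x i) \<ge> 0" using x1 by (intro sum_nonneg) auto
    ultimately show ?thesis using I m0 by (auto simp: xb_def field_simps)
  qed
  obtain xs where xs: "distinct xs" "set xs = I"
    and intX: "\<And>g. g \<in> borel_measurable borel \<Longrightarrow>
      (\<integral>\<omega>. g (\<Sum>i\<in>I. X i \<omega>) \<partial>M) = bsum g (concat (map (\<lambda>i. replicate n (x i)) xs))"
    using prob_space.indep_sum[OF M I(1), of X n x] X_indep X_bin x1 unfolding I_def by auto
  define psX where "psX = concat (map (\<lambda>i. replicate n (x i)) xs)"
  have lenX: "length psX = m * n" unfolding psX_def len_cr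
    using xs I by (simp add: distinct_card[symmetric])
  have sumX: "sum_list psX = real n * (\<Sum>i\<in>I. x i)" unfolding psX_def sum_cr
    using xs by (simp add: sum_list_distinct_conv_sum_set)
  have setX: "set psX \<subseteq> {0..1}" using xs x1 by (auto simp: psX_def)
  have XmI[measurable]: "(\<lambda>\<omega>. \<Sum>i\<in>I. X i \<omega>) \<in> borel_measurable M"
    using X_bin by (intro borel_measurable_sum) (auto simp: binomial_rv_def I_def)
  have Sm[measurable]: "S \<in> borel_measurable MS" using S_bin by (simp add: binomial_rv_def)
  have intS: "(\<integral>\<omega>. g (S \<omega>) \<partial>MS) = bsum g (replicate (m * n) xb)" if "g \<in> borel_measurable borel" for g
    using prob_space.binom_rv_int[OF MS S_bin[folded I_def, folded xb_def] xb that]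
      binom_sum[OF xb, of "m * n" g] binom_expect[OF xb, of g "m * n"] by simp
  have distrY: "distr (P i) borel (\<lambda>\<omega>. \<Sum>j\<in>I. Y i j \<omega>) = distr (measure_pmf (binomial_pmf (m * n) (x i))) borel real"
    if i: "i \<in> I" for i
  proof -
    have Pi: "prob_space (P i)" using P i by (auto simp: I_def)
    obtain ys where ys: "distinct ys" "set ys = I"
      and intY: "\<And>g. g \<in> borel_measurable borel \<Longrightarrow>
        (\<integral>\<omega>. g (\<Sum>j\<in>I. Y i j \<omega>) \<partial>P i) = bsum g (concat (map (\<lambda>j. replicate n (x i)) ys))"
      using prob_space.indep_sum[OF Pi I(1), of "Y i" n "\<lambda>_. x i"] Y_indep[of i] Y_bin[of i] x1[OF i] i
      unfolding I_def by auto
    have "length ys = m" using ys I by (simp add: distinct_card[symmetric])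
    then have e: "concat (map (\<lambda>j. replicate n (x i)) ys) = replicate (m * n) (x i)"
      by (simp add: const_cr mult.commute)
    show ?thesis
    proof (rule distr_eq_binom[OF Pi _ x1[OF i]])
      show "(\<lambda>\<omega>. \<Sum>j\<in>I. Y i j \<omega>) \<in> borel_measurable (P i)"
        using Y_bin i by (intro borel_measurable_sum) (auto simp: binomial_rv_def I_def)
      show "\<And>g. g \<in> borel_measurable borel \<Longrightarrow>
         (\<integral>\<omega>. g (\<Sum>j\<in>I. Y i j \<omega>) \<partial>P i) = bsum g (replicate (m * n) (x i))"
        using intY e by simp
    qed
  qed
  have mix: "unif_mixture I (\<lambda>i. distr (P i) borel (\<lambda>\<omega>. \<Sum>j\<in>I. Y i j \<omega>)) =
     distr (measure_pmf (pmf_of_set I \<bind> (\<lambda>i. binomial_pmf (m * n) (x i)))) borel real"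
    by (rule mixture_eq[OF I(1,2)]) (rule distrY)
  have key: "(\<integral>t. f t \<partial>distr M borel (\<lambda>\<omega>. \<Sum>i\<in>I. X i \<omega>)) \<le> (\<integral>t. f t \<partial>distr MS borel S) \<and>
      (\<integral>t. f t \<partial>distr MS borel S) \<le> (\<integral>t. f t \<partial>unif_mixture I (\<lambda>i. distr (P i) borel (\<lambda>\<omega>. \<Sum>j\<in>I. Y i j \<omega>)))"
    if f: "convex_on UNIV f" for f
  proof -
    have fm[measurable]: "f \<in> borel_measurable borel"
      by (rule borel_measurable_continuous_onI[OF convex_on_continuous[OF open_UNIV f]])
    have df: "dconv f" by (rule dconv_convex[OF f])
    have e1: "(\<integral>t. f t \<partial>distr M borel (\<lambda>\<omega>. \<Sum>i\<in>I. X i \<omega>)) = bsum f psX"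
      by (subst integral_distr) (auto simp: intX psX_def)
    have e2: "(\<integral>t. f t \<partial>distr MS borel S) = bsum f (replicate (m * n) xb)"
      by (subst integral_distr) (auto simp: intS)
    have e3: "(\<integral>t. f t \<partial>unif_mixture I (\<lambda>i. distr (P i) borel (\<lambda>\<omega>. \<Sum>j\<in>I. Y i j \<omega>))) =
       (\<Sum>i\<in>I. bsum f (replicate (m * n) (x i))) / real (card I)"
      unfolding mix by (rule integral_mixture[OF I(1,2) x1 fm])
    have "bsum f psX \<le> bsum f (replicate (length psX) xb)"
    proof (rule hoeffding[OF df setX])
      show "sum_list psX = real (length psX) * xb"
        using m0 by (simp add: sumX lenX xb_def)
    qed
    moreover have "bsum f (replicate (m * n) xb) \<le> (\<Sum>i\<in>I. bsum f (replicate (m * n) (x i))) / real (card I)"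
      using jensen_bsum[OF df I(1,2), where x=x and N="m * n"] x1 I by (simp add: xb_def)
    ultimately show ?thesis unfolding e1 e2 e3 using lenX by simp
  qed
  show ?thesis
    unfolding cx_le_def I_def[symmetric] using key by (meson order.trans)
qed

end
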